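(* Let $\Gamma$ be a finitely generated abelian group, $\mathcal{A}$ a finite list of elements of $\Gamma$, and $G=\mathbb{S}^1$ or $G=\mathbb{C}^\times$. Fix $k\in\mathbb{Z}_{>0}$. Then for every sublist $\mathcal{S}\subseteq\mathcal{A}$, $$\#\big(\mathrm{cc}(H_{\mathcal{S},G})\cap L[k]\big)=m(\mathcal{S};\mathbb{Z}/k\mathbb{Z}).$$
   Context: $G$ is written multiplicatively; $T=\operatorname{Hom}(\Gamma,G)$ with identity element $\mathbf{1}$. For $\alpha\in\mathcal{A}$, $H_{\alpha,G}=\{\varphi\in T\mid\varphi(\alpha)=1\}$; for $\mathcal{S}\subseteq\mathcal{A}$, $H_{\mathcal{S},G}=\bigcap_{\alpha\in\mathcal{S}}H_{\alpha,G}$ ($H_{\emptyset,G}=T$). $\mathrm{cc}(X)$ denotes the set of connected components of $X$. $L$ is the set of connected components of all nonempty $H_{\mathcal{S},G}$, $\mathcal{S}\subseteq\mathcal{A}$. For $k\in\mathbb{Z}$, $E_k:T\to T$, $\varphi\mapsto\varphi^k$, and $L[k]=\{\mathcal{C}\in L\mid\mathbf{1}\in E_k(\mathcal{C})\}$. $m(\mathcal{S};\mathbb{Z}/k\mathbb{Z})=\#\operatorname{Hom}\big((\Gamma/\langle\mathcal{S}\rangle)_{\operatorname{tor}},\mathbb{Z}/k\mathbb{Z}\big)$, where $\langle\mathcal{S}\rangle$ is the subgroup generated by $\mathcal{S}$ and $(\cdot)_{\operatorname{tor}}$ denotes the torsion subgroup. *)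

theory Defs
  imports "HOL-Analysis.Analysis" "HOL-Algebra.Algebra"
begin

definition fin_gen_group :: "('a, 'b) monoid_scheme \<Rightarrow> bool" where
  "fin_gen_group \<Gamma> \<longleftrightarrow> (\<exists>F. finite F \<and> F \<subseteq> carrier \<Gamma> \<and> generate \<Gamma> F = carrier \<Gamma>)"

(* T = Hom(Gamma, G), G given as a subgroup Gs of the multiplicative group of complex numbers
   (S^1 = sphere 0 1 or C^x = - {0}).  Homomorphisms are extensional (undefined off the carrier)
   and T carries the topology of pointwise convergence (product topology on 'a \<Rightarrow> complex). *)
definition homT :: "('a, 'b) monoid_scheme \<Rightarrow> complex set \<Rightarrow> ('a \<Rightarrow> complex) set" where
  "homT \<Gamma> Gs = {\<phi>. \<phi> \<in> extensional (carrier \<Gamma>) \<and> (\<forall>x\<in>carrier \<Gamma>. \<phi> x \<in> Gs) \<and>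
      (\<forall>x\<in>carrier \<Gamma>. \<forall>y\<in>carrier \<Gamma>. \<phi> (x \<otimes>\<^bsub>\<Gamma>\<^esub> y) = \<phi> x * \<phi> y)}"

definition oneT :: "('a, 'b) monoid_scheme \<Rightarrow> 'a \<Rightarrow> complex" where
  "oneT \<Gamma> = (\<lambda>x\<in>carrier \<Gamma>. 1)"

definition Hset :: "('a, 'b) monoid_scheme \<Rightarrow> complex set \<Rightarrow> 'a set \<Rightarrow> ('a \<Rightarrow> complex) set" where
  "Hset \<Gamma> Gs S = {\<phi> \<in> homT \<Gamma> Gs. \<forall>\<alpha>\<in>S. \<phi> \<alpha> = 1}"

definition ccomp :: "'t::topological_space set \<Rightarrow> 't set set" where
  "ccomp Y = connected_component_set Y ` Y"

definition Ek :: "('a, 'b) monoid_scheme \<Rightarrow> int \<Rightarrow> ('a \<Rightarrow> complex) \<Rightarrow> ('a \<Rightarrow> complex)" where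
  "Ek \<Gamma> k \<phi> = (\<lambda>x\<in>carrier \<Gamma>. \<phi> x powi k)"

definition Lset :: "('a, 'b) monoid_scheme \<Rightarrow> complex set \<Rightarrow> 'a list \<Rightarrow> ('a \<Rightarrow> complex) set set" where
  "Lset \<Gamma> Gs A = \<Union>{ccomp (Hset \<Gamma> Gs S) | S. S \<subseteq> set A \<and> Hset \<Gamma> Gs S \<noteq> {}}"

definition Lk :: "('a, 'b) monoid_scheme \<Rightarrow> complex set \<Rightarrow> 'a list \<Rightarrow> int \<Rightarrow> ('a \<Rightarrow> complex) set set" where
  "Lk \<Gamma> Gs A k = {C \<in> Lset \<Gamma> Gs A. oneT \<Gamma> \<in> Ek \<Gamma> k ` C}"

definition tor_group :: "('c, 'd) monoid_scheme \<Rightarrow> ('c, 'd) monoid_scheme" where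
  "tor_group Q = subgroup_generated Q {x \<in> carrier Q. \<exists>n::nat. n > 0 \<and> x [^]\<^bsub>Q\<^esub> n = \<one>\<^bsub>Q\<^esub>}"

definition mult_S :: "('a, 'b) monoid_scheme \<Rightarrow> 'a set \<Rightarrow> nat \<Rightarrow> nat" where
  "mult_S \<Gamma> S k = card (hom (tor_group (\<Gamma> Mod generate \<Gamma> S)) (integer_mod_group k)
        \<inter> extensional (carrier (tor_group (\<Gamma> Mod generate \<Gamma> S))))"

end

theory Submission
  imports Defs
begin

lemma int_mult_closed:
  fixes K :: "('i \<Rightarrow> int) set"
  assumes "(\<lambda>x. 0) \<in> K" "\<forall>v\<in>K. \<forall>w\<in>K. (\<lambda>x. v x + w x) \<in> K" "\<forall>v\<in>K. (\<lambda>x. - v x) \<in> K" "v \<in> K"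
  shows "(\<lambda>x. q * v x) \<in> K"
proof -
  have nat: "(\<lambda>x. int n * v x) \<in> K" for n :: nat
  proof (induction n)
    case 0 then show ?case using assms(1) by simp
  next
    case (Suc n)
    have "(\<lambda>x. int (Suc n) * v x) = (\<lambda>x. v x + int n * v x)"
      by (auto simp: algebra_simps)
    then show ?case using Suc assms(2,4) by metis
  qed
  show ?thesis
  proof (cases "q \<ge> 0")
    case True
    then show ?thesis using nat[of "nat q"] by simp
  next
    case False
    have "(\<lambda>x. q * v x) = (\<lambda>x. - (int (nat (-q)) * v x))" using False by auto
    then show ?thesis using nat[of "nat (-q)"] assms(3) by metis
  qed
qed

lemma free_subgroup_int:
  fixes K :: "('i \<Rightarrow> int) set"
  assumes "finite I" "\<forall>v\<in>K. \<forall>x. x \<notin> I \<longrightarrow> v x = 0" "(\<lambda>x. 0) \<in> K"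
    "\<forall>v\<in>K. \<forall>w\<in>K. (\<lambda>x. v x + w x) \<in> K" "\<forall>v\<in>K. (\<lambda>x. - v x) \<in> K"
  shows "\<exists>(s::nat) b. (\<forall>j<s. b j \<in> K) \<and> (\<forall>v\<in>K. \<exists>c. v = (\<lambda>x. \<Sum>j<s. c j * b j x)) \<and>
      (\<forall>c. (\<forall>x. (\<Sum>j<s. c j * b j x) = 0) \<longrightarrow> (\<forall>j<s. c j = 0))"
  using assms
proof (induction I arbitrary: K rule: finite_induct)
  case empty
  then have "K = {(\<lambda>x. 0)}" by (auto simp: fun_eq_iff)
  show ?case
    by (intro exI[of _ "0::nat"] exI[of _ "\<lambda>_. (\<lambda>x. 0)"] conjI allI ballI impI)
      (use \<open>K = {(\<lambda>x. 0)}\<close> in auto)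
next
  case (insert a I)
  define K0 where "K0 = {v\<in>K. v a = 0}"
  have "\<exists>(s::nat) b. (\<forall>j<s. b j \<in> K0) \<and> (\<forall>v\<in>K0. \<exists>c. v = (\<lambda>x. \<Sum>j<s. c j * b j x)) \<and>
      (\<forall>c. (\<forall>x. (\<Sum>j<s. c j * b j x) = 0) \<longrightarrow> (\<forall>j<s. c j = 0))"
  proof (rule insert.IH)
    show "\<forall>v\<in>K0. \<forall>x. x \<notin> I \<longrightarrow> v x = 0"
    proof (intro ballI allI impI)
      fix v x assume "v \<in> K0" "x \<notin> I"
      then show "v x = 0" using insert.prems(1) unfolding K0_def by (cases "x = a") auto
    qed
    show "(\<lambda>x. 0) \<in> K0" using insert.prems(2) unfolding K0_def by simp
    show "\<forall>v\<in>K0. \<forall>w\<in>K0. (\<lambda>x. v x + w x) \<in> K0"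
      using insert.prems(3) unfolding K0_def by simp
    show "\<forall>v\<in>K0. (\<lambda>x. - v x) \<in> K0"
      using insert.prems(4) unfolding K0_def by simp
  qed
  then obtain s :: nat and b where sb: "(\<forall>j<s. b j \<in> K0) \<and> (\<forall>v\<in>K0. \<exists>c. v = (\<lambda>x. \<Sum>j<s. c j * b j x)) \<and>
      (\<forall>c. (\<forall>x. (\<Sum>j<s. c j * b j x) = 0) \<longrightarrow> (\<forall>j<s. c j = 0))" by (elim exE) (rule that)
  have b1: "\<forall>j<s. b j \<in> K0" using sb by (rule conjunct1)
  have b2: "\<forall>v\<in>K0. \<exists>c. v = (\<lambda>x. \<Sum>j<s. c j * b j x)" using conjunct1[OF conjunct2[OF sb]] .
  have b3: "\<forall>c. (\<forall>x. (\<Sum>j<s. c j * b j x) = 0) \<longrightarrow> (\<forall>j<s. c j = 0)" using conjunct2[OF conjunct2[OF sb]] .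
  show ?case
  proof (cases "\<forall>v\<in>K. v a = 0")
    case True
    then have "K0 = K" by (auto simp: K0_def)
    then show ?thesis using b1 b2 b3 by blast
  next
    case False
    then obtain v0 where v0: "v0 \<in> K" "v0 a \<noteq> 0" by blast
    have "\<exists>v\<in>K. v a > 0"
    proof (cases "v0 a > 0")
      case True then show ?thesis using v0 by blast
    next
      case False then show ?thesis using v0 insert.prems(4) by (intro bexI[of _ "\<lambda>x. - v0 x"]) auto
    qed
    then obtain v1 where v1: "v1 \<in> K" "v1 a > 0" by blast
    define d where "d = (LEAST n::nat. n > 0 \<and> (\<exists>v\<in>K. v a = int n))"
    have ex: "\<exists>n::nat. n > 0 \<and> (\<exists>v\<in>K. v a = int n)"
      using v1 by (intro exI[of _ "nat (v1 a)"]) auto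
    have d: "d > 0 \<and> (\<exists>v\<in>K. v a = int d)" unfolding d_def by (rule LeastI_ex[OF ex])
    have dmin: "\<And>n::nat. n > 0 \<Longrightarrow> (\<exists>v\<in>K. v a = int n) \<Longrightarrow> d \<le> n"
      unfolding d_def by (rule Least_le) blast
    from d obtain u where u: "u \<in> K" "u a = int d" by blast
    have minus: "(\<lambda>x. v x - w x) \<in> K" if "v \<in> K" "w \<in> K" for v w
    proof -
      have nw: "(\<lambda>x. - w x) \<in> K" using insert.prems(4) that(2) by blast
      have "(\<lambda>x. v x + (\<lambda>x. - w x) x) \<in> K" by (rule bspec[OF bspec[OF insert.prems(3) that(1)] nw])
      then show ?thesis by simp
    qed
    have multK: "(\<lambda>x. q * v x) \<in> K" if "v \<in> K" for v q
      using int_mult_closed[of K v q] insert.prems that by blast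
    have dvd: "int d dvd v a" if "v \<in> K" for v
    proof -
      define q where "q = v a div int d"
      define w where "w = (\<lambda>x. v x - q * u x)"
      have w: "w \<in> K" unfolding w_def using minus[OF that multK[OF u(1)]] by blast
      have wa: "w a = v a mod int d" unfolding w_def q_def using u
        by (simp add: minus_div_mult_eq_mod)
      have "w a = 0"
      proof (rule ccontr)
        assume "w a \<noteq> 0"
        then have "w a > 0" using wa d by (metis pos_mod_sign of_nat_0_less_iff order_le_less)
        then have "d \<le> nat (w a)" using dmin[of "nat (w a)"] w by auto
        then have dle: "int d \<le> w a" using le_nat_iff[of "w a" d] \<open>w a > 0\<close> by simp
        moreover have "w a < int d" using wa d by simp
        ultimately show False using dle by linarith
      qed
      then show ?thesis using wa by (simp add: dvd_eq_mod_eq_0)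
    qed
    define b' where "b' = b(s := u)"
    show ?thesis
    proof (intro exI[of _ "Suc s"] exI[of _ b'] conjI allI impI ballI)
      fix j assume "j < Suc s"
      then show "b' j \<in> K" using b1 u by (auto simp: b'_def K0_def less_Suc_eq)
    next
      fix v assume v: "v \<in> K"
      obtain q where q: "v a = int d * q" using dvd[OF v] by blast
      define w where "w = (\<lambda>x. v x - q * u x)"
      have "w \<in> K0" unfolding w_def K0_def using minus[OF v multK[OF u(1)]] u q
        by (auto simp: algebra_simps)
      then obtain c where c: "w = (\<lambda>x. \<Sum>j<s. c j * b j x)" using b2 by blast
      have "v = (\<lambda>x. \<Sum>j<Suc s. (c(s := q)) j * b' j x)"
      proof
        fix x
        have "v x = w x + q * u x" unfolding w_def by simp
        also have "\<dots> = (\<Sum>j<s. c j * b j x) + q * u x" using c by simp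
        also have "(\<Sum>j<s. c j * b j x) = (\<Sum>j<s. (c(s := q)) j * b' j x)"
          by (rule sum.cong) (auto simp: b'_def)
        finally show "v x = (\<Sum>j<Suc s. (c(s := q)) j * b' j x)" by (simp add: b'_def)
      qed
      then show "\<exists>c. v = (\<lambda>x. \<Sum>j<Suc s. c j * b' j x)" by blast
    next
      fix c j assume h: "\<forall>x. (\<Sum>j<Suc s. c j * b' j x) = 0" and j: "j < Suc s"
      have ba: "b' j a = 0" if "j < s" for j using b1 that by (auto simp: b'_def K0_def)
      have "(\<Sum>j<Suc s. c j * b' j a) = 0" using h by blast
      then have "c s * int d = 0" using ba by (simp add: b'_def u)
      then have cs: "c s = 0" using d by simp
      have "\<forall>x. (\<Sum>j<s. c j * b j x) = 0"
      proof
        fix x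
        have "(\<Sum>j<Suc s. c j * b' j x) = 0" using h by blast
        then have "(\<Sum>j<s. c j * b' j x) = 0" using cs by simp
        moreover have "(\<Sum>j<s. c j * b' j x) = (\<Sum>j<s. c j * b j x)"
          by (rule sum.cong) (auto simp: b'_def)
        ultimately show "(\<Sum>j<s. c j * b j x) = 0" by simp
      qed
      then have "\<forall>j<s. c j = 0" using b3 by blast
      then show "c j = 0" using cs j by (auto simp: less_Suc_eq)
    qed
  qed
qed


context comm_group
begin

lemma sub_nat_pow_closed: "subgroup H G \<Longrightarrow> h \<in> H \<Longrightarrow> h [^] (n::nat) \<in> H"
  by (metis subgroup_int_pow_closed int_pow_int)

lemma fp_fun: "g \<in> A \<rightarrow> carrier G \<Longrightarrow> (\<lambda>i. g i [^] (c i::int)) \<in> A \<rightarrow> carrier G"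
  by auto

lemma fp_closed: "g \<in> A \<rightarrow> carrier G \<Longrightarrow> finprod G (\<lambda>i. g i [^] (c i::int)) A \<in> carrier G"
  by (intro finprod_closed fp_fun)

lemma fp_add: "g \<in> A \<rightarrow> carrier G \<Longrightarrow> finprod G (\<lambda>i. g i [^] (c i + d i::int)) A
   = finprod G (\<lambda>i. g i [^] c i) A \<otimes> finprod G (\<lambda>i. g i [^] (d i::int)) A"
proof -
  assume g: "g \<in> A \<rightarrow> carrier G"
  have "finprod G (\<lambda>i. g i [^] (c i + d i::int)) A = finprod G (\<lambda>i. g i [^] c i \<otimes> g i [^] d i) A"
    using g by (intro finprod_cong') (auto intro!: int_pow_mult)
  also have "\<dots> = finprod G (\<lambda>i. g i [^] c i) A \<otimes> finprod G (\<lambda>i. g i [^] (d i::int)) A"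
    using g by (intro finprod_multf fp_fun)
  finally show ?thesis .
qed

lemma fp_zero: "finprod G (\<lambda>i. g i [^] (0::int)) A = \<one>"
  by simp

lemma fp_neg: "g \<in> A \<rightarrow> carrier G \<Longrightarrow> finprod G (\<lambda>i. g i [^] (- c i::int)) A
   = inv finprod G (\<lambda>i. g i [^] c i) A"
proof -
  assume g: "g \<in> A \<rightarrow> carrier G"
  have "finprod G (\<lambda>i. g i [^] (- c i + c i::int)) A = \<one>" by simp
  then have "finprod G (\<lambda>i. g i [^] (- c i::int)) A \<otimes> finprod G (\<lambda>i. g i [^] c i) A = \<one>"
    using fp_add[OF g, of "\<lambda>i. - c i" c] by simp
  then show ?thesis using g by (intro inv_equality[symmetric] fp_closed)
qed

lemma cancel1:
  assumes "a \<in> carrier G" "b \<in> carrier G" "y \<in> carrier G"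
  shows "inv (y \<otimes> inv a) \<otimes> (y \<otimes> inv b) = a \<otimes> inv b"
proof -
  have h: "inv y \<otimes> (y \<otimes> inv b) = inv b" using assms by (simp add: m_assoc[symmetric])
  have "inv (y \<otimes> inv a) = inv y \<otimes> a" using assms by (simp add: inv_mult)
  then have "inv (y \<otimes> inv a) \<otimes> (y \<otimes> inv b) = (a \<otimes> inv y) \<otimes> (y \<otimes> inv b)"
    using assms by (simp add: m_comm)
  also have "\<dots> = a \<otimes> (inv y \<otimes> (y \<otimes> inv b))" using assms by (simp add: m_assoc)
  also have "\<dots> = a \<otimes> inv b" using h by simp
  finally show ?thesis .
qed

lemma structure_mod_radical:
  assumes F: "finite F" "F \<subseteq> carrier G" "generate G F = carrier G"
    and Rs: "subgroup R G"
    and rad: "\<And>x m. x \<in> carrier G \<Longrightarrow> m > 0 \<Longrightarrow> x [^] (m::nat) \<in> R \<Longrightarrow> x \<in> R"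
  shows "\<exists>(s::nat) e. (\<forall>j<s. e j \<in> carrier G) \<and>
     (\<forall>x\<in>carrier G. \<exists>c. x \<otimes> inv (finprod G (\<lambda>j. e j [^] (c j::int)) {..<s}) \<in> R) \<and>
     (\<forall>c. finprod G (\<lambda>j. e j [^] (c j::int)) {..<s} \<in> R \<longrightarrow> (\<forall>j<s. c j = 0))"
proof -
  interpret R: subgroup R G by fact
  define indep where "indep I \<longleftrightarrow> I \<subseteq> F \<and> (\<forall>c::'a\<Rightarrow>int. finprod G (\<lambda>i. i [^] c i) I \<in> R \<longrightarrow> (\<forall>i\<in>I. c i = 0))" for I
  have "indep {}" by (simp add: indep_def)
  moreover have "\<forall>I. indep I \<longrightarrow> card I < Suc (card F)"
    by (auto simp: indep_def intro!: le_imp_less_Suc card_mono[OF F(1)])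
  ultimately obtain I where I: "indep I" and Imax: "\<And>J. indep J \<Longrightarrow> card J \<le> card I"
    using ex_has_greatest_nat[of indep "{}" card "Suc (card F)"] by blast
  have IF: "I \<subseteq> F" using I by (simp add: indep_def)
  have finI: "finite I" using IF F(1) finite_subset by blast
  have Icar: "I \<subseteq> carrier G" using IF F(2) by blast
  have Iind: "\<And>c. finprod G (\<lambda>i. i [^] (c i::int)) I \<in> R \<Longrightarrow> \<forall>i\<in>I. c i = 0" using I by (simp add: indep_def)
  have Ifun: "(\<lambda>i. i) \<in> I \<rightarrow> carrier G" using Icar by auto
  define P where "P c = finprod G (\<lambda>i. i [^] (c i::int)) I" for c
  have Pc: "P c \<in> carrier G" for c unfolding P_def by (rule fp_closed[OF Ifun])
  have Padd: "P (\<lambda>i. c i + d i) = P c \<otimes> P d" for c d unfolding P_def by (rule fp_add[OF Ifun])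
  have P0: "P (\<lambda>i. 0) = \<one>" unfolding P_def by simp
  have Pneg: "P (\<lambda>i. - c i) = inv P c" for c unfolding P_def by (rule fp_neg[OF Ifun])
  have Pcong: "(\<forall>i\<in>I. c i = d i) \<Longrightarrow> P c = P d" for c d
    unfolding P_def by (intro finprod_cong' fp_fun[OF Ifun]) auto
  define W where "W = {x \<in> carrier G. \<exists>c. x \<otimes> inv (P c) \<in> R}"
  have W_sub: "subgroup W G"
  proof (rule subgroupI)
    show "W \<subseteq> carrier G" by (auto simp: W_def)
    have "\<one> \<otimes> inv (P (\<lambda>i. 0)) \<in> R" by (simp add: P0)
    then show "W \<noteq> {}" unfolding W_def by blast
  next
    fix a assume "a \<in> W"
    then obtain c where a: "a \<in> carrier G" "a \<otimes> inv (P c) \<in> R" by (auto simp: W_def)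
    have "inv a \<otimes> inv (P (\<lambda>i. - c i)) = inv (a \<otimes> inv (P c))"
      using a Pc by (simp add: Pneg inv_mult)
    then have "inv a \<otimes> inv (P (\<lambda>i. - c i)) \<in> R" using a(2) by simp
    then show "inv a \<in> W" using a by (auto simp: W_def)
  next
    fix a b assume "a \<in> W" "b \<in> W"
    then obtain c d where a: "a \<in> carrier G" "a \<otimes> inv (P c) \<in> R"
      and b: "b \<in> carrier G" "b \<otimes> inv (P d) \<in> R" by (auto simp: W_def)
    have "(a \<otimes> b) \<otimes> inv (P (\<lambda>i. c i + d i)) = (a \<otimes> inv (P c)) \<otimes> (b \<otimes> inv (P d))"
      using a b Pc by (simp add: Padd inv_mult m_ac)
    then have "(a \<otimes> b) \<otimes> inv (P (\<lambda>i. c i + d i)) \<in> R" using a b by simp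
    then show "a \<otimes> b \<in> W" using a b by (auto simp: W_def)
  qed
  have RW: "R \<subseteq> W"
  proof
    fix x assume "x \<in> R"
    then have "x \<otimes> inv (P (\<lambda>i. 0)) \<in> R" by (simp add: P0)
    then show "x \<in> W" using \<open>x \<in> R\<close> R.mem_carrier unfolding W_def by blast
  qed
  have PW: "P c \<in> W" for c
  proof -
    have "P c \<otimes> inv (P c) \<in> R" using Pc by simp
    then show ?thesis using Pc unfolding W_def by blast
  qed
  have fW: "\<exists>m>0. f [^] (m::nat) \<in> W" if f: "f \<in> F" for f
  proof (cases "f \<in> I")
    case True
    have "P (\<lambda>i. if i = f then 1 else 0) = finprod G (\<lambda>i. if f = i then i else \<one>) I"
      unfolding P_def by (intro finprod_cong') (use Icar in auto)
    also have "\<dots> = f" using True finI Ifun by (rule finprod_singleton)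
    finally have "f \<in> W" using PW by metis
    then show ?thesis by (intro exI[of _ 1]) (use True Icar in auto)
  next
    case False
    have "card (insert f I) > card I" using False finI by simp
    then have "\<not> indep (insert f I)" using Imax by fastforce
    then obtain c where c: "finprod G (\<lambda>i. i [^] (c i::int)) (insert f I) \<in> R"
      and nz: "\<exists>i\<in>insert f I. c i \<noteq> 0" using IF f by (auto simp: indep_def)
    have fc: "f \<in> carrier G" using f F(2) by blast
    have eq: "finprod G (\<lambda>i. i [^] c i) (insert f I) = f [^] c f \<otimes> P c"
      unfolding P_def using finI False fc Ifun by (intro finprod_insert) auto
    have cf: "c f \<noteq> 0"
    proof
      assume "c f = 0"
      then have "P c \<in> R" using c eq Pc by simp
      then have "\<forall>i\<in>I. c i = 0" using Iind unfolding P_def by blast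
      then show False using nz \<open>c f = 0\<close> by auto
    qed
    have "f [^] c f \<otimes> P c \<in> W" using c eq RW by auto
    then have "(f [^] c f \<otimes> P c) \<otimes> inv (P c) \<in> W"
      using subgroup.m_closed[OF W_sub] subgroup.m_inv_closed[OF W_sub PW] by blast
    then have fcW: "f [^] c f \<in> W" using fc Pc by (simp add: m_assoc)
    show ?thesis
    proof (cases "c f > 0")
      case True
      then show ?thesis using fcW by (intro exI[of _ "nat (c f)"]) (auto simp: int_pow_int[symmetric])
    next
      case False
      then have "f [^] (int (nat (- c f))) = inv (f [^] c f)" using fc
        by (metis cf int_pow_neg minus_minus nat_0_le neg_0_le_iff_le not_le order_le_less)
      then show ?thesis using fcW False cf subgroup.m_inv_closed[OF W_sub fcW]
        by (intro exI[of _ "nat (- c f)"]) (auto simp: int_pow_int)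
    qed
  qed
  have "\<forall>f\<in>F. \<exists>m. m > 0 \<and> f [^] (m::nat) \<in> W" using fW by blast
  then obtain m where m0: "\<forall>f\<in>F. m f > 0 \<and> f [^] (m f::nat) \<in> W"
    using bchoice[of F "\<lambda>f m. m > 0 \<and> f [^] (m::nat) \<in> W"] by blast
  have m: "\<And>f. f \<in> F \<Longrightarrow> m f > 0 \<and> f [^] (m f::nat) \<in> W" using m0 by blast
  define M where "M = (\<Prod>f\<in>F. m f)"
  have Mpos: "M > 0" unfolding M_def using m by (simp add: prod_pos)
  define Xs where "Xs = {x \<in> carrier G. x [^] M \<in> W}"
  have X_sub: "subgroup Xs G"
  proof (rule subgroupI)
    show "Xs \<subseteq> carrier G" by (auto simp: Xs_def)
    have "\<one> \<in> Xs" using subgroup.one_closed[OF W_sub] unfolding Xs_def by simp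
    then show "Xs \<noteq> {}" by blast
  next
    fix a assume "a \<in> Xs"
    then have a: "a \<in> carrier G" "a [^] M \<in> W" unfolding Xs_def by auto
    then have "(inv a) [^] M \<in> W" using subgroup.m_inv_closed[OF W_sub] by (simp add: nat_pow_inv)
    then show "inv a \<in> Xs" using a unfolding Xs_def by simp
  next
    fix a b assume "a \<in> Xs" "b \<in> Xs"
    then have a: "a \<in> carrier G" "a [^] M \<in> W" "b \<in> carrier G" "b [^] M \<in> W" unfolding Xs_def by auto
    then have "(a \<otimes> b) [^] M \<in> W" using subgroup.m_closed[OF W_sub] by (simp add: nat_pow_distrib)
    then show "a \<otimes> b \<in> Xs" using a unfolding Xs_def by simp
  qed
  have "F \<subseteq> Xs"
  proof
    fix f assume f: "f \<in> F"
    then have "m f dvd M" unfolding M_def using F(1) by auto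
    then obtain q where q: "M = m f * q" by blast
    have fc: "f \<in> carrier G" using f F(2) by blast
    have "f [^] M = (f [^] m f) [^] q" using nat_pow_pow[OF fc, of "m f" q] q by simp
    also have "\<dots> \<in> W" using m[OF f] sub_nat_pow_closed[OF W_sub] by blast
    finally show "f \<in> Xs" using f F(2) unfolding Xs_def by blast
  qed
  then have "carrier G \<subseteq> Xs" using generate_subgroup_incl[OF _ X_sub] F(3) by metis
  then have allW: "x [^] M \<in> W" if "x \<in> carrier G" for x using that unfolding Xs_def by blast
  define \<theta> where "\<theta> x = (SOME c. (\<forall>i. i \<notin> I \<longrightarrow> c i = 0) \<and> x [^] M \<otimes> inv (P c) \<in> R)" for x
  have \<theta>spec: "(\<forall>i. i \<notin> I \<longrightarrow> \<theta> x i = 0) \<and> x [^] M \<otimes> inv (P (\<theta> x)) \<in> R" if x: "x \<in> carrier G" for x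
  proof -
    obtain c where c: "x [^] M \<otimes> inv (P c) \<in> R" using allW[OF x] unfolding W_def by blast
    define c' where "c' i = (if i \<in> I then c i else 0)" for i
    have "P c' = P c" by (rule Pcong) (simp add: c'_def)
    then have "(\<forall>i. i \<notin> I \<longrightarrow> c' i = 0) \<and> x [^] M \<otimes> inv (P c') \<in> R" using c by (simp add: c'_def)
    then show ?thesis unfolding \<theta>_def
      by (rule someI[where P="\<lambda>c. (\<forall>i. i \<notin> I \<longrightarrow> c i = 0) \<and> x [^] M \<otimes> inv (P c) \<in> R"])
  qed
  have uniq: "c = d" if "\<forall>i. i \<notin> I \<longrightarrow> c i = 0" "\<forall>i. i \<notin> I \<longrightarrow> d i = 0"
      "y \<otimes> inv (P c) \<in> R" "y \<otimes> inv (P d) \<in> R" "y \<in> carrier G" for c d y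
  proof -
    have "P (\<lambda>i. c i + - d i) = P c \<otimes> inv (P d)"
      using Padd[of c "\<lambda>i. - d i"] Pneg[of d] by simp
    also have "\<dots> = inv (y \<otimes> inv (P c)) \<otimes> (y \<otimes> inv (P d))"
      using cancel1[OF Pc Pc that(5)] by simp
    also have "\<dots> \<in> R" using that(3,4) by simp
    finally have "P (\<lambda>i. c i + - d i) \<in> R" .
    then have h: "\<forall>i\<in>I. c i + - d i = 0" using Iind[of "\<lambda>i. c i + - d i"] unfolding P_def by simp
    show ?thesis
    proof (rule ext)
      fix i show "c i = d i" using h that(1,2) by (cases "i \<in> I") auto
    qed
  qed
  have \<theta>mult: "\<theta> (x \<otimes> y) = (\<lambda>i. \<theta> x i + \<theta> y i)" if "x \<in> carrier G" "y \<in> carrier G" for x y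
  proof (rule uniq[of _ _ "(x \<otimes> y) [^] M"])
    show "\<forall>i. i \<notin> I \<longrightarrow> \<theta> (x \<otimes> y) i = 0" using \<theta>spec that by blast
    show "\<forall>i. i \<notin> I \<longrightarrow> \<theta> x i + \<theta> y i = 0" using \<theta>spec that by simp
    show "(x \<otimes> y) [^] M \<otimes> inv P (\<theta> (x \<otimes> y)) \<in> R" using \<theta>spec that by blast
    have "(x \<otimes> y) [^] M \<otimes> inv P (\<lambda>i. \<theta> x i + \<theta> y i) =
       (x [^] M \<otimes> inv (P (\<theta> x))) \<otimes> (y [^] M \<otimes> inv (P (\<theta> y)))"
      using that Pc by (simp add: Padd inv_mult m_ac nat_pow_distrib)
    also have "\<dots> \<in> R" using \<theta>spec that by blast
    finally show "(x \<otimes> y) [^] M \<otimes> inv P (\<lambda>i. \<theta> x i + \<theta> y i) \<in> R" .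
    show "(x \<otimes> y) [^] M \<in> carrier G" using that by simp
  qed
  have \<theta>R: "\<theta> x = (\<lambda>i. 0) \<longleftrightarrow> x \<in> R" if x: "x \<in> carrier G" for x
  proof
    assume "\<theta> x = (\<lambda>i. 0)"
    then have "x [^] M \<in> R" using \<theta>spec[OF x] x by (simp add: P0)
    then show "x \<in> R" using rad x Mpos by blast
  next
    assume "x \<in> R"
    then have "x [^] M \<otimes> inv (P (\<lambda>i. 0)) \<in> R" using sub_nat_pow_closed[OF Rs] x by (simp add: P0)
    then show "\<theta> x = (\<lambda>i. 0)" using uniq[of "\<theta> x" "\<lambda>i. 0" "x [^] M"] \<theta>spec[OF x] x by simp
  qed
  have \<theta>one: "\<theta> \<one> = (\<lambda>i. 0)" using \<theta>R by simp
  have \<theta>inv: "\<theta> (inv x) = (\<lambda>i. - \<theta> x i)" if x: "x \<in> carrier G" for x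
  proof -
    have "(\<lambda>i. \<theta> x i + \<theta> (inv x) i) = (\<lambda>i. 0)" using \<theta>mult[of x "inv x"] x \<theta>one by simp
    then show ?thesis by (metis add_eq_0_iff ext)
  qed
  have \<theta>natpow: "\<theta> (x [^] (n::nat)) = (\<lambda>i. int n * \<theta> x i)" if x: "x \<in> carrier G" for x n
  proof (induction n)
    case 0 then show ?case using \<theta>one by simp
  next
    case (Suc n) then show ?case using \<theta>mult[of "x [^] n" x] x by (simp add: algebra_simps)
  qed
  have \<theta>pow: "\<theta> (x [^] (n::int)) = (\<lambda>i. n * \<theta> x i)" if x: "x \<in> carrier G" for x n
  proof (cases "n \<ge> 0")
    case True
    have "x [^] n = x [^] (nat n)" using True int_pow_int[of G x "nat n"] by simp
    then show ?thesis using \<theta>natpow[OF x, of "nat n"] True by simp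
  next
    case False
    have "x [^] n = inv (x [^] (nat (- n)))" using False int_pow_neg_int[OF x, of "nat (- n)"] by simp
    then show ?thesis using \<theta>natpow[OF x, of "nat (- n)"] \<theta>inv[of "x [^] nat (- n)"] x False by simp
  qed
  have \<theta>prod: "\<theta> (finprod G (\<lambda>j. e j [^] (c j::int)) {..<n}) = (\<lambda>i. \<Sum>j<n. c j * \<theta> (e j) i)"
    if e: "\<forall>j<n. e j \<in> carrier G" for e :: "nat \<Rightarrow> 'a" and c and n :: nat
    using e
  proof (induction n)
    case 0 then show ?case using \<theta>one by simp
  next
    case (Suc n)
    have ef: "e \<in> {..<n} \<rightarrow> carrier G" using Suc.prems by auto
    have en: "e n \<in> carrier G" using Suc.prems by simp
    have "finprod G (\<lambda>j. e j [^] c j) {..<Suc n} = e n [^] c n \<otimes> finprod G (\<lambda>j. e j [^] c j) {..<n}"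
      unfolding lessThan_Suc using Suc.prems fp_fun[OF ef] by (intro finprod_insert) auto
    then have "\<theta> (finprod G (\<lambda>j. e j [^] c j) {..<Suc n}) =
        (\<lambda>i. \<theta> (e n [^] c n) i + \<theta> (finprod G (\<lambda>j. e j [^] c j) {..<n}) i)"
      using \<theta>mult[of "e n [^] c n" "finprod G (\<lambda>j. e j [^] c j) {..<n}"] fp_closed[OF ef] en by simp
    also have "\<dots> = (\<lambda>i. c n * \<theta> (e n) i + (\<Sum>j<n. c j * \<theta> (e j) i))"
      using \<theta>pow[OF en] Suc by simp
    also have "\<dots> = (\<lambda>i. \<Sum>j<Suc n. c j * \<theta> (e j) i)"
      by (simp add: add.commute)
    finally show ?case .
  qed
  define K where "K = \<theta> ` carrier G"
  have "\<exists>(s::nat) b. (\<forall>j<s. b j \<in> K) \<and> (\<forall>v\<in>K. \<exists>c. v = (\<lambda>x. \<Sum>j<s. c j * b j x)) \<and>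
      (\<forall>c. (\<forall>x. (\<Sum>j<s. c j * b j x) = 0) \<longrightarrow> (\<forall>j<s. c j = 0))"
  proof (rule free_subgroup_int[OF finI])
    show "\<forall>v\<in>K. \<forall>x. x \<notin> I \<longrightarrow> v x = 0" using \<theta>spec unfolding K_def by blast
    show "(\<lambda>x. 0) \<in> K" using \<theta>one unfolding K_def by (metis one_closed imageI)
    show "\<forall>v\<in>K. \<forall>w\<in>K. (\<lambda>x. v x + w x) \<in> K"
    proof (intro ballI)
      fix v w assume "v \<in> K" "w \<in> K"
      then obtain a b where ab: "a \<in> carrier G" "b \<in> carrier G" "v = \<theta> a" "w = \<theta> b"
        unfolding K_def by blast
      then have "(\<lambda>x. v x + w x) = \<theta> (a \<otimes> b)" using \<theta>mult by simp
      then show "(\<lambda>x. v x + w x) \<in> K" unfolding K_def using ab by (metis imageI m_closed)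
    qed
    show "\<forall>v\<in>K. (\<lambda>x. - v x) \<in> K"
    proof
      fix v assume "v \<in> K"
      then obtain a where a: "a \<in> carrier G" "v = \<theta> a" unfolding K_def by blast
      then have "(\<lambda>x. - v x) = \<theta> (inv a)" using \<theta>inv by simp
      then show "(\<lambda>x. - v x) \<in> K" unfolding K_def using a by (metis imageI inv_closed)
    qed
  qed
  then obtain s :: nat and b :: "nat \<Rightarrow> 'a \<Rightarrow> int" where sb: "(\<forall>j<s. b j \<in> K) \<and> (\<forall>v\<in>K. \<exists>c. v = (\<lambda>x. \<Sum>j<s. c j * b j x)) \<and>
      (\<forall>c. (\<forall>x. (\<Sum>j<s. c j * b j x) = 0) \<longrightarrow> (\<forall>j<s. c j = 0))" by (elim exE) (rule that)
  have b1: "\<forall>j<s. b j \<in> K" using sb by (rule conjunct1)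
  have b2: "\<forall>v\<in>K. \<exists>c. v = (\<lambda>x. \<Sum>j<s. c j * b j x)" using conjunct1[OF conjunct2[OF sb]] .
  have b3: "\<forall>c. (\<forall>x. (\<Sum>j<s. c j * b j x) = 0) \<longrightarrow> (\<forall>j<s. c j = 0)" using conjunct2[OF conjunct2[OF sb]] .
  have "\<forall>j. \<exists>y. j < s \<longrightarrow> y \<in> carrier G \<and> \<theta> y = b j"
  proof
    fix j show "\<exists>y. j < s \<longrightarrow> y \<in> carrier G \<and> \<theta> y = b j"
    proof (cases "j < s")
      case True
      then have "b j \<in> \<theta> ` carrier G" using b1 unfolding K_def by simp
      then obtain y where "b j = \<theta> y" "y \<in> carrier G" by (rule imageE)
      then show ?thesis by auto
    next
      case False then show ?thesis by simp
    qed
  qed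
  then obtain e where e0: "\<forall>j. j < s \<longrightarrow> e j \<in> carrier G \<and> \<theta> (e j) = b j"
    using choice[of "\<lambda>j y. j < s \<longrightarrow> y \<in> carrier G \<and> \<theta> y = b j"] by blast
  have e: "\<And>j. j < s \<Longrightarrow> e j \<in> carrier G \<and> \<theta> (e j) = b j" using e0 by blast
  have ecar: "\<forall>j<s. e j \<in> carrier G" using e by blast
  have ef: "e \<in> {..<s} \<rightarrow> carrier G" using e by auto
  have \<theta>prod': "\<theta> (finprod G (\<lambda>j. e j [^] (c j::int)) {..<s}) = (\<lambda>i. \<Sum>j<s. c j * b j i)" for c
  proof -
    have "(\<lambda>i. \<Sum>j<s. c j * \<theta> (e j) i) = (\<lambda>i. \<Sum>j<s. c j * b j i)"
      using e by (intro ext sum.cong) auto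
    then show ?thesis using \<theta>prod[OF ecar, of c] by simp
  qed
  show ?thesis
  proof (intro exI[of _ s] exI[of _ e] conjI ballI allI impI)
    show "\<And>j. j < s \<Longrightarrow> e j \<in> carrier G" using e by blast
  next
    fix x assume x: "x \<in> carrier G"
    have "\<theta> x \<in> K" unfolding K_def using x by (rule imageI)
    then obtain c where c: "\<theta> x = (\<lambda>i. \<Sum>j<s. c j * b j i)" using b2 by blast
    have pc: "finprod G (\<lambda>j. e j [^] (c j::int)) {..<s} \<in> carrier G" by (rule fp_closed[OF ef])
    have "\<theta> (x \<otimes> inv (finprod G (\<lambda>j. e j [^] (c j::int)) {..<s})) = (\<lambda>i. 0)"
      using x pc \<theta>mult \<theta>inv \<theta>prod' c by simp
    then have "x \<otimes> inv (finprod G (\<lambda>j. e j [^] (c j::int)) {..<s}) \<in> R"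
      using \<theta>R[of "x \<otimes> inv (finprod G (\<lambda>j. e j [^] (c j::int)) {..<s})"] x pc by simp
    then show "\<exists>c. x \<otimes> inv (finprod G (\<lambda>j. e j [^] (c j::int)) {..<s}) \<in> R" by (rule exI[of _ c])
  next
    fix c j assume h: "finprod G (\<lambda>j. e j [^] (c j::int)) {..<s} \<in> R" and j: "j < s"
    have "\<theta> (finprod G (\<lambda>j. e j [^] (c j::int)) {..<s}) = (\<lambda>i. 0)"
      using \<theta>R[OF fp_closed[OF ef]] h by simp
    then have "(\<lambda>i. \<Sum>j<s. c j * b j i) = (\<lambda>i. 0)" using \<theta>prod'[of c] by simp
    then have "\<forall>x. (\<Sum>j<s. c j * b j x) = 0" by (simp add: fun_eq_iff)
    then show "c j = 0" using b3 j by blast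
  qed
qed

end

lemma END_A2: True by simp


definition rt :: "nat \<Rightarrow> int \<Rightarrow> complex" where
  "rt k a = exp (2 * of_real pi * \<i> * of_int a / of_nat k)"

lemma rt_add: "rt k (a + b) = rt k a * rt k b"
  unfolding rt_def by (simp add: exp_add[symmetric] add_divide_distrib distrib_left)

lemma rt_mult_k: "k > 0 \<Longrightarrow> rt k (q * int k) = 1"
proof -
  assume k: "k > 0"
  have "2 * of_real pi * \<i> * of_int (q * int k) / of_nat k = (2 * of_int q * pi) * \<i>"
    using k by (simp add: field_simps)
  then show ?thesis unfolding rt_def using exp_integer_2pi[of "of_int q"] by simp
qed

lemma rt_mod: "k > 0 \<Longrightarrow> rt k (a mod int k) = rt k a"
proof -
  assume k: "k > 0"
  have "rt k a = rt k ((a div int k) * int k + a mod int k)" by simp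
  also have "\<dots> = rt k (a mod int k)" using rt_mult_k[OF k] by (simp only: rt_add) simp
  finally show ?thesis by simp
qed

lemma rt_pow: "k > 0 \<Longrightarrow> rt k a ^ k = 1"
proof -
  assume k: "k > 0"
  have "rt k a ^ k = exp (of_nat k * (2 * of_real pi * \<i> * of_int a / of_nat k))"
    unfolding rt_def by (rule exp_of_nat_mult[symmetric])
  also have "\<dots> = rt k (a * int k)" unfolding rt_def using k by (simp add: field_simps)
  finally show ?thesis using rt_mult_k[OF k] by simp
qed

lemma rt_norm: "norm (rt k a) = 1"
  unfolding rt_def by simp

lemma rt_inj:
  assumes k: "k > 0" and a: "0 \<le> a" "a < int k" and b: "0 \<le> b" "b < int k" and eq: "rt k a = rt k b"
  shows "a = b"
proof -
  have "rt k (a - b) * rt k b = rt k b" using eq rt_add[of k "a - b" b] by simp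
  moreover have "rt k b \<noteq> 0" unfolding rt_def by simp
  ultimately have "rt k (a - b) = 1" by simp
  then obtain n :: int where n: "Im (2 * of_real pi * \<i> * of_int (a - b) / of_nat k) = of_int (2 * n) * pi"
    unfolding rt_def exp_eq_1 by blast
  then have e1: "2 * pi * of_int (a - b) / of_nat k = of_int (2 * n) * pi" by simp
  have "real_of_int (a - b) = (2 * pi * of_int (a - b) / of_nat k) * of_nat k / (2 * pi)"
    using k by (simp add: field_simps)
  also have "\<dots> = of_int (2 * n) * pi * of_nat k / (2 * pi)" using e1 by simp
  also have "\<dots> = of_int n * of_nat k" by (simp add: field_simps)
  finally have "real_of_int (a - b) = of_int n * of_nat k" .
  then have ab: "a - b = n * int k" by (metis of_int_eq_iff of_int_mult of_int_of_nat_eq)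
  have "n = 0"
  proof (rule ccontr)
    assume "n \<noteq> 0"
    then have "\<bar>n * int k\<bar> \<ge> int k" using k by (simp add: abs_mult mult_le_cancel_right1)
    then show False using ab a b by linarith
  qed
  then show ?thesis using ab by simp
qed

lemma rt_surj:
  assumes k: "k > 0" and z: "z ^ k = 1"
  shows "\<exists>a. 0 \<le> a \<and> a < int k \<and> z = rt k a"
proof -
  have "z \<in> {z::complex. z^k = 1}" using z by simp
  then obtain j where j: "j < k" "z = exp(2 * of_real pi * \<i> * of_nat j / of_nat k)"
    using complex_roots_unity[of k] k by auto
  then show ?thesis unfolding rt_def by (intro exI[of _ "int j"]) auto
qed

locale cchar = comm_group G for G (structure) +
  fixes \<phi> :: "'a \<Rightarrow> complex"
  assumes nz: "\<And>x. x \<in> carrier G \<Longrightarrow> \<phi> x \<noteq> 0"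
    and mul: "\<And>x y. x \<in> carrier G \<Longrightarrow> y \<in> carrier G \<Longrightarrow> \<phi> (x \<otimes> y) = \<phi> x * \<phi> y"
begin

lemma phi_one: "\<phi> \<one> = 1"
proof -
  have "\<phi> \<one> = \<phi> \<one> * \<phi> \<one>" using mul[of \<one> \<one>] by simp
  then have "\<phi> \<one> = 0 \<or> \<phi> \<one> = 1" by (metis mult_cancel_left1)
  then show ?thesis using nz[of \<one>] by simp
qed

lemma phi_inv: "x \<in> carrier G \<Longrightarrow> \<phi> (inv x) = inverse (\<phi> x)"
proof -
  assume x: "x \<in> carrier G"
  have "\<phi> (inv x) * \<phi> x = 1" using mul[of "inv x" x] x phi_one by simp
  then show ?thesis using nz[OF x] by (simp add: field_simps)
qed

lemma natpow: "x \<in> carrier G \<Longrightarrow> \<phi> (x [^] (n::nat)) = \<phi> x ^ n"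
  by (induction n) (simp_all add: phi_one mul)

lemma intpow: "x \<in> carrier G \<Longrightarrow> \<phi> (x [^] (n::int)) = \<phi> x powi n"
proof -
  assume x: "x \<in> carrier G"
  show ?thesis
  proof (cases "n \<ge> 0")
    case True
    then obtain m where m: "n = int m" by (metis nonneg_eq_int)
    have "x [^] n = x [^] m" unfolding m by (rule int_pow_int)
    then show ?thesis using natpow[OF x, of m] m by simp
  next
    case False
    then obtain m where m: "n = - int m" by (metis nonpos_int_cases linorder_not_le less_imp_le)
    have "x [^] n = inv (x [^] m)" unfolding m by (rule int_pow_neg_int[OF x])
    then have "\<phi> (x [^] n) = inverse (\<phi> x ^ m)" using phi_inv natpow x by simp
    also have "\<dots> = \<phi> x powi n" unfolding m by (simp add: power_int_minus)
    finally show ?thesis .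
  qed
qed

lemma prod: "finite A \<Longrightarrow> f \<in> A \<rightarrow> carrier G \<Longrightarrow> \<phi> (finprod G f A) = (\<Prod>i\<in>A. \<phi> (f i))"
proof (induction A rule: finite_induct)
  case empty then show ?case by (simp add: phi_one)
next
  case (insert a A)
  then have "f \<in> A \<rightarrow> carrier G" "f a \<in> carrier G" by auto
  then show ?case using insert by (simp add: mul finprod_closed)
qed

lemma gen: "S \<subseteq> carrier G \<Longrightarrow> \<forall>s\<in>S. \<phi> s = 1 \<Longrightarrow> x \<in> generate G S \<Longrightarrow> \<phi> x = 1"
proof -
  assume S: "S \<subseteq> carrier G" "\<forall>s\<in>S. \<phi> s = 1"
  show "x \<in> generate G S \<Longrightarrow> \<phi> x = 1"
  proof (induction x rule: generate.induct)
    case one then show ?case by (rule phi_one)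
  next
    case (incl h) then show ?case using S by blast
  next
    case (inv h) then show ?case using S phi_inv[of h] by (simp add: subsetD)
  next
    case (eng h1 h2)
    then show ?case using generate_in_carrier[OF S(1)] by (simp add: mul)
  qed
qed

end

lemma homT_cchar: "comm_group G \<Longrightarrow> \<phi> \<in> homT G Gs \<Longrightarrow> Gs \<subseteq> - {0} \<Longrightarrow> cchar G \<phi>"
  unfolding homT_def cchar_def cchar_axioms_def by auto

lemma END_A3: True by simp


locale L0 = comm_group G for G :: "('a, 'b) monoid_scheme" (structure) +
  fixes S :: "'a set"
  assumes Ssub: "S \<subseteq> carrier G"
begin

definition N where "N = generate G S"
definition R where "R = {x \<in> carrier G. \<exists>n::nat. n > 0 \<and> x [^] n \<in> N}"

lemma N_sub: "subgroup N G"
  unfolding N_def by (rule generate_is_subgroup[OF Ssub])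

lemma N_normal: "N \<lhd> G"
  using subgroup_imp_normal[OF N_sub] .

lemma S_N: "S \<subseteq> N"
proof
  fix x assume "x \<in> S" then show "x \<in> N" unfolding N_def by (rule generate.incl)
qed

lemma N_R: "N \<subseteq> R"
proof
  fix x assume x: "x \<in> N"
  then have "x \<in> carrier G" using subgroup.mem_carrier[OF N_sub] by blast
  then show "x \<in> R" unfolding R_def using x by (auto intro!: exI[of _ 1])
qed

lemma R_sub: "subgroup R G"
proof (rule subgroupI)
  show "R \<subseteq> carrier G" unfolding R_def by blast
  show "R \<noteq> {}" using N_R subgroup.one_closed[OF N_sub] by blast
next
  fix a assume "a \<in> R"
  then obtain n where a: "a \<in> carrier G" "n > 0" "a [^] (n::nat) \<in> N" unfolding R_def by blast
  then have "(inv a) [^] n \<in> N" using subgroup.m_inv_closed[OF N_sub] by (simp add: nat_pow_inv)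
  then show "inv a \<in> R" unfolding R_def using a by blast
next
  fix a b assume "a \<in> R" "b \<in> R"
  then obtain n m where a: "a \<in> carrier G" "n > 0" "a [^] (n::nat) \<in> N"
    and b: "b \<in> carrier G" "m > 0" "b [^] (m::nat) \<in> N" unfolding R_def by blast
  have "(a \<otimes> b) [^] (n * m) = (a [^] n) [^] m \<otimes> (b [^] m) [^] n"
    using a b by (simp add: nat_pow_distrib nat_pow_pow mult.commute)
  also have "\<dots> \<in> N" using a b sub_nat_pow_closed[OF N_sub] subgroup.m_closed[OF N_sub] by blast
  finally have h: "(a \<otimes> b) [^] (n * m) \<in> N" .
  moreover have "n * m > 0" using a b by simp
  ultimately show "a \<otimes> b \<in> R" unfolding R_def using a b by blast
qed

lemma R_rad: "x \<in> carrier G \<Longrightarrow> m > 0 \<Longrightarrow> x [^] (m::nat) \<in> R \<Longrightarrow> x \<in> R"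
proof -
  assume x: "x \<in> carrier G" "m > 0" "x [^] (m::nat) \<in> R"
  then obtain n where n: "n > 0" "(x [^] m) [^] (n::nat) \<in> N" unfolding R_def by blast
  then have "x [^] (m * n) \<in> N" using x by (simp add: nat_pow_pow)
  moreover have "m * n > 0" using x n by simp
  ultimately show "x \<in> R" unfolding R_def using x by blast
qed

end

locale L46 = L0 +
  fixes Gs :: "complex set" and k :: nat and s :: nat and e :: "nat \<Rightarrow> 'a"
  assumes Gs: "Gs = sphere 0 1 \<or> Gs = - {0}" and kpos: "k > 0"
    and e_car: "\<forall>j<s. e j \<in> carrier G"
    and e_span: "\<forall>x\<in>carrier G. \<exists>c. x \<otimes> inv (finprod G (\<lambda>j. e j [^] (c j::int)) {..<s}) \<in> R"
    and e_ind: "\<forall>c. finprod G (\<lambda>j. e j [^] (c j::int)) {..<s} \<in> R \<longrightarrow> (\<forall>j<s. c j = 0)"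
begin

lemma Gs_nz: "Gs \<subseteq> - {0}" using Gs by auto

definition E where "E c = finprod G (\<lambda>j. e j [^] (c j::int)) {..<s}"

lemma efun: "e \<in> {..<s} \<rightarrow> carrier G" using e_car by auto

lemma E_closed [simp]: "E c \<in> carrier G"
  unfolding E_def by (rule fp_closed[OF efun])

lemma E_add: "E (\<lambda>j. c j + d j) = E c \<otimes> E d"
  unfolding E_def by (rule fp_add[OF efun])

lemma E_neg: "E (\<lambda>j. - c j) = inv E c"
  unfolding E_def by (rule fp_neg[OF efun])

lemma E_zero: "E (\<lambda>j. 0) = \<one>"
  unfolding E_def by simp

lemma E_cong: "\<forall>j<s. c j = d j \<Longrightarrow> E c = E d"
  unfolding E_def by (intro finprod_cong' fp_fun[OF efun]) auto

definition cf where "cf x = (SOME c. x \<otimes> inv (E c) \<in> R)"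
definition tau where "tau x = x \<otimes> inv (E (cf x))"

lemma tau_R: "x \<in> carrier G \<Longrightarrow> tau x \<in> R"
  unfolding tau_def cf_def using e_span unfolding E_def[symmetric] by (metis someI_ex)

lemma tau_closed: "x \<in> carrier G \<Longrightarrow> tau x \<in> carrier G"
  unfolding tau_def by simp

lemma cf_uniq:
  assumes y: "y \<in> carrier G" and c: "y \<otimes> inv (E c) \<in> R" and d: "y \<otimes> inv (E d) \<in> R"
  shows "\<forall>j<s. c j = d j"
proof -
  interpret R: subgroup R G by (rule R_sub)
  have "E (\<lambda>j. c j + - d j) = E c \<otimes> inv (E d)"
    using E_add[of c "\<lambda>j. - d j"] E_neg[of d] by simp
  also have "\<dots> = inv (y \<otimes> inv (E c)) \<otimes> (y \<otimes> inv (E d))"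
    using cancel1[OF E_closed E_closed y] by simp
  also have "\<dots> \<in> R" using c d by simp
  finally have "E (\<lambda>j. c j + - d j) \<in> R" .
  then have "\<forall>j<s. c j + - d j = 0" using e_ind[rule_format, of "\<lambda>j. c j + - d j"] unfolding E_def by simp
  then show ?thesis by simp
qed

lemma cf_mult:
  assumes x: "x \<in> carrier G" and y: "y \<in> carrier G"
  shows "\<forall>j<s. cf (x \<otimes> y) j = cf x j + cf y j"
proof (rule cf_uniq[of "x \<otimes> y"])
  interpret R: subgroup R G by (rule R_sub)
  show "x \<otimes> y \<in> carrier G" using x y by simp
  show "x \<otimes> y \<otimes> inv E (cf (x \<otimes> y)) \<in> R" using tau_R[of "x \<otimes> y"] x y by (simp add: tau_def)
  have "x \<otimes> y \<otimes> inv E (\<lambda>j. cf x j + cf y j) = tau x \<otimes> tau y"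
    using x y by (simp add: tau_def E_add inv_mult m_ac)
  also have "\<dots> \<in> R" using tau_R x y by simp
  finally show "x \<otimes> y \<otimes> inv E (\<lambda>j. cf x j + cf y j) \<in> R" .
qed

lemma tau_mult:
  assumes x: "x \<in> carrier G" and y: "y \<in> carrier G"
  shows "tau (x \<otimes> y) = tau x \<otimes> tau y"
proof -
  have "E (cf (x \<otimes> y)) = E (\<lambda>j. cf x j + cf y j)" using cf_mult[OF x y] by (rule E_cong)
  then show ?thesis using x y by (simp add: tau_def E_add inv_mult m_ac)
qed

lemma cf_R: "x \<in> R \<Longrightarrow> \<forall>j<s. cf x j = 0"
proof -
  assume x: "x \<in> R"
  have xc: "x \<in> carrier G" using x subgroup.mem_carrier[OF R_sub] by blast
  have "x \<otimes> inv (E (\<lambda>j. 0)) \<in> R" using x xc by (simp add: E_zero)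
  moreover have "x \<otimes> inv (E (cf x)) \<in> R" using tau_R[OF xc] by (simp add: tau_def)
  ultimately show ?thesis using cf_uniq[OF xc] by metis
qed

lemma tau_on_R: "x \<in> R \<Longrightarrow> tau x = x"
proof -
  assume x: "x \<in> R"
  have xc: "x \<in> carrier G" using x subgroup.mem_carrier[OF R_sub] by blast
  have "E (cf x) = E (\<lambda>j. 0)" using cf_R[OF x] by (intro E_cong) simp
  then show ?thesis using xc by (simp add: tau_def E_zero)
qed

lemma decomp: "x \<in> carrier G \<Longrightarrow> x = tau x \<otimes> E (cf x)"
  unfolding tau_def by (simp add: m_assoc)

lemma S_R: "S \<subseteq> R" using S_N N_R by blast

end

lemma END_A4: True by simp


context L46
begin

definition Q where "Q = G Mod N"
definition T where "T = {XX \<in> carrier Q. \<exists>n::nat. n > 0 \<and> XX [^]\<^bsub>Q\<^esub> n = \<one>\<^bsub>Q\<^esub>}"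

lemma Q_comm: "comm_group Q"
  unfolding Q_def by (rule abelian_FactGroup[OF N_sub])

lemma Q_carrier: "carrier Q = (\<lambda>x. N #> x) ` carrier G"
  unfolding Q_def by (simp add: carrier_FactGroup)

lemma Q_one: "\<one>\<^bsub>Q\<^esub> = N"
  unfolding Q_def by simp

lemma Q_mult: "XX \<otimes>\<^bsub>Q\<^esub> YY = XX <#> YY"
  unfolding Q_def by simp

lemma Q_pow: "x \<in> carrier G \<Longrightarrow> (N #> x) [^]\<^bsub>Q\<^esub> (n::nat) = N #> (x [^] n)"
  unfolding Q_def using normal.FactGroup_pow[OF N_normal] by simp

lemma coset_N: "x \<in> carrier G \<Longrightarrow> (N #> x = N) \<longleftrightarrow> x \<in> N"
  using coset_join1[of N x] coset_join2[of x N] N_sub by blast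

lemma T_eq: "T = (\<lambda>x. N #> x) ` R"
proof
  show "T \<subseteq> (\<lambda>x. N #> x) ` R"
  proof
    fix XX assume "XX \<in> T"
    then obtain x n where x: "x \<in> carrier G" "XX = N #> x" "n > 0" "XX [^]\<^bsub>Q\<^esub> (n::nat) = \<one>\<^bsub>Q\<^esub>"
      unfolding T_def Q_carrier by blast
    then have "N #> (x [^] n) = N" using Q_pow Q_one by simp
    then have "x [^] n \<in> N" using coset_N x by simp
    then have "x \<in> R" unfolding R_def using x by blast
    then show "XX \<in> (\<lambda>x. N #> x) ` R" using x by blast
  qed
next
  show "(\<lambda>x. N #> x) ` R \<subseteq> T"
  proof
    fix XX assume "XX \<in> (\<lambda>x. N #> x) ` R"
    then obtain x where x: "x \<in> R" "XX = N #> x" by blast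
    then obtain n where n: "x \<in> carrier G" "n > 0" "x [^] (n::nat) \<in> N" unfolding R_def by blast
    have "XX [^]\<^bsub>Q\<^esub> n = \<one>\<^bsub>Q\<^esub>" using x n Q_pow Q_one coset_N by simp
    moreover have "XX \<in> carrier Q" using x n Q_carrier by blast
    ultimately show "XX \<in> T" unfolding T_def using n by blast
  qed
qed

lemma T_sub: "subgroup T Q"
proof -
  interpret Q: comm_group Q by (rule Q_comm)
  show ?thesis
  proof (rule Q.subgroupI)
    show "T \<subseteq> carrier Q" unfolding T_def by blast
    have "\<one>\<^bsub>Q\<^esub> \<in> T" unfolding T_def by (auto intro!: exI[of _ 1])
    then show "T \<noteq> {}" by blast
  next
    fix a assume "a \<in> T"
    then obtain n where a: "a \<in> carrier Q" "n > 0" "a [^]\<^bsub>Q\<^esub> (n::nat) = \<one>\<^bsub>Q\<^esub>" unfolding T_def by blast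
    then have "(inv\<^bsub>Q\<^esub> a) [^]\<^bsub>Q\<^esub> n = \<one>\<^bsub>Q\<^esub>" by (simp add: Q.nat_pow_inv)
    then show "inv\<^bsub>Q\<^esub> a \<in> T" unfolding T_def using a by auto
  next
    fix a b assume "a \<in> T" "b \<in> T"
    then obtain n m where a: "a \<in> carrier Q" "n > 0" "a [^]\<^bsub>Q\<^esub> (n::nat) = \<one>\<^bsub>Q\<^esub>"
      and b: "b \<in> carrier Q" "m > 0" "b [^]\<^bsub>Q\<^esub> (m::nat) = \<one>\<^bsub>Q\<^esub>" unfolding T_def by blast
    have ea: "a [^]\<^bsub>Q\<^esub> (n * m) = \<one>\<^bsub>Q\<^esub>" using a Q.nat_pow_pow[of a n m] by simp
    have eb: "b [^]\<^bsub>Q\<^esub> (n * m) = \<one>\<^bsub>Q\<^esub>" using b Q.nat_pow_pow[of b m n] by (simp add: mult.commute)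
    have "(a \<otimes>\<^bsub>Q\<^esub> b) [^]\<^bsub>Q\<^esub> (n * m) = a [^]\<^bsub>Q\<^esub> (n * m) \<otimes>\<^bsub>Q\<^esub> b [^]\<^bsub>Q\<^esub> (n * m)"
      using a b by (simp add: Q.nat_pow_distrib)
    also have "\<dots> = \<one>\<^bsub>Q\<^esub>" using ea eb by simp
    finally have h: "(a \<otimes>\<^bsub>Q\<^esub> b) [^]\<^bsub>Q\<^esub> (n * m) = \<one>\<^bsub>Q\<^esub>" .
    have "n * m > 0" using a b by simp
    then show "a \<otimes>\<^bsub>Q\<^esub> b \<in> T" unfolding T_def using h Q.m_closed[OF a(1) b(1)] by blast
  qed
qed

lemma tor_carrier: "carrier (tor_group Q) = T"
  unfolding tor_group_def T_def[symmetric] using subgroup.carrier_subgroup_generated_subgroup[OF T_sub] .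

lemma tor_mult: "XX \<otimes>\<^bsub>tor_group Q\<^esub> YY = XX <#> YY"
  unfolding tor_group_def by (simp add: Q_mult)

lemma tor_one: "\<one>\<^bsub>tor_group Q\<^esub> = N"
  unfolding tor_group_def by (simp add: Q_one)

lemma rcos_mult: "x \<in> carrier G \<Longrightarrow> y \<in> carrier G \<Longrightarrow> (N #> x) <#> (N #> y) = N #> (x \<otimes> y)"
  using normal.rcos_sum[OF N_normal] by blast

definition Hom where "Hom = hom (tor_group Q) (integer_mod_group k) \<inter> extensional (carrier (tor_group Q))"

lemma Hom_iff: "\<xi> \<in> Hom \<longleftrightarrow> \<xi> \<in> extensional T \<and> (\<forall>XX\<in>T. \<xi> XX \<in> {0..<int k}) \<and>
   (\<forall>XX\<in>T. \<forall>YY\<in>T. \<xi> (XX <#> YY) = (\<xi> XX + \<xi> YY) mod int k)"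
  unfolding Hom_def hom_def tor_carrier using kpos
  by (auto simp: tor_mult carrier_integer_mod_group Pi_iff)

lemma Hom_one: "\<xi> \<in> Hom \<Longrightarrow> \<xi> N = 0"
proof -
  assume h: "\<xi> \<in> Hom"
  have "group Q" using Q_comm comm_group.axioms(2) by blast
  then have g1: "group (tor_group Q)" unfolding tor_group_def by (rule group.group_subgroup_generated)
  have "group_hom (tor_group Q) (integer_mod_group k) \<xi>"
    using g1 h unfolding Hom_def by (auto intro!: group_hom.intro simp: group_hom_axioms_def)
  then have "\<xi> \<one>\<^bsub>tor_group Q\<^esub> = \<one>\<^bsub>integer_mod_group k\<^esub>" by (rule group_hom.hom_one)
  then show ?thesis by (simp add: tor_one)
qed

definition HS where "HS = Hset G Gs S"

lemma HS_cchar: "\<phi> \<in> HS \<Longrightarrow> cchar G \<phi>"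
  unfolding HS_def Hset_def using homT_cchar[OF comm_group_axioms _ Gs_nz] by blast

lemma HS_homT: "\<phi> \<in> HS \<Longrightarrow> \<phi> \<in> homT G Gs"
  unfolding HS_def Hset_def by blast

lemma HS_N: "\<phi> \<in> HS \<Longrightarrow> x \<in> N \<Longrightarrow> \<phi> x = 1"
  using cchar.gen[OF HS_cchar Ssub] unfolding HS_def Hset_def N_def by blast

lemma HS_ext: "\<phi> \<in> HS \<Longrightarrow> \<phi> \<in> extensional (carrier G)"
  using HS_homT unfolding homT_def by blast

definition phi where "phi \<xi> = (\<lambda>x\<in>carrier G. rt k (\<xi> (N #> tau x)))"

lemma coset_T: "x \<in> R \<Longrightarrow> N #> x \<in> T" using T_eq by blast

lemma phi_mult:
  assumes h: "\<xi> \<in> Hom" and x: "x \<in> carrier G" and y: "y \<in> carrier G"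
  shows "phi \<xi> (x \<otimes> y) = phi \<xi> x * phi \<xi> y"
proof -
  have tx: "tau x \<in> R" "tau x \<in> carrier G" using tau_R tau_closed x by auto
  have ty: "tau y \<in> R" "tau y \<in> carrier G" using tau_R tau_closed y by auto
  have "N #> tau (x \<otimes> y) = (N #> tau x) <#> (N #> tau y)"
    using tau_mult[OF x y] rcos_mult tx ty by simp
  then have "\<xi> (N #> tau (x \<otimes> y)) = (\<xi> (N #> tau x) + \<xi> (N #> tau y)) mod int k"
    using h coset_T tx ty unfolding Hom_iff by simp
  then show ?thesis using x y kpos by (simp add: phi_def rt_mod rt_add)
qed

lemma phi_HS: "\<xi> \<in> Hom \<Longrightarrow> phi \<xi> \<in> HS"
proof -
  assume h: "\<xi> \<in> Hom"
  have vals: "phi \<xi> x \<in> Gs" if "x \<in> carrier G" for x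
  proof -
    have "norm (phi \<xi> x) = 1" using that by (simp add: phi_def rt_norm)
    then show ?thesis using Gs by auto
  qed
  have S1: "phi \<xi> a = 1" if "a \<in> S" for a
  proof -
    have a: "a \<in> R" "a \<in> carrier G" "a \<in> N" using that S_R Ssub S_N by auto
    have "N #> tau a = N" using tau_on_R[OF a(1)] coset_N a by simp
    then show ?thesis using a Hom_one[OF h] by (simp add: phi_def rt_def)
  qed
  show ?thesis unfolding HS_def Hset_def homT_def
    using vals S1 phi_mult[OF h] Ssub by (auto simp: phi_def)
qed

lemma phi_k: "\<xi> \<in> Hom \<Longrightarrow> Ek G (int k) (phi \<xi>) = oneT G"
  unfolding Ek_def oneT_def using kpos by (intro restrict_ext) (simp add: phi_def rt_pow)

definition Phi where "Phi \<xi> = connected_component_set HS (phi \<xi>)"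

lemma ev_finite:
  assumes t: "t \<in> R"
  shows "finite ((\<lambda>\<phi>. \<phi> t) ` HS)"
proof -
  obtain n where n: "t \<in> carrier G" "n > 0" "t [^] (n::nat) \<in> N" using t unfolding R_def by blast
  have "(\<lambda>\<phi>. \<phi> t) ` HS \<subseteq> {z. z ^ n = 1}"
  proof
    fix z assume "z \<in> (\<lambda>\<phi>. \<phi> t) ` HS"
    then obtain \<phi> where \<phi>: "\<phi> \<in> HS" "z = \<phi> t" by blast
    have "\<phi> t ^ n = \<phi> (t [^] n)" using cchar.natpow[OF HS_cchar[OF \<phi>(1)] n(1)] by simp
    also have "\<dots> = 1" using HS_N[OF \<phi>(1) n(3)] .
    finally show "z \<in> {z. z ^ n = 1}" using \<phi> by simp
  qed
  moreover have "finite {z::complex. z ^ n = 1}" using n by (intro finite_roots_unity) simp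
  ultimately show ?thesis by (rule finite_subset)
qed

lemma comp_const:
  assumes C: "connected C" "C \<subseteq> HS" and t: "t \<in> R" and p: "\<phi>1 \<in> C" "\<phi>2 \<in> C"
  shows "\<phi>1 t = \<phi>2 t"
proof -
  have cont: "continuous_on C (\<lambda>\<phi>::'a \<Rightarrow> complex. \<phi> t)"
    by (rule continuous_on_subset[OF continuous_on_product_coordinates]) simp
  have "finite ((\<lambda>\<phi>. \<phi> t) ` C)" using finite_subset[OF image_mono[OF C(2)] ev_finite[OF t]] .
  then have "(\<lambda>\<phi>. \<phi> t) constant_on C" by (rule continuous_finite_range_constant[OF C(1) cont])
  then show ?thesis using p unfolding constant_on_def by metis
qed

lemma Hom_vals: "\<xi> \<in> Hom \<Longrightarrow> XX \<in> T \<Longrightarrow> 0 \<le> \<xi> XX \<and> \<xi> XX < int k"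
  unfolding Hom_iff by auto

lemma phi_on_R: "x \<in> R \<Longrightarrow> phi \<xi> x = rt k (\<xi> (N #> x))"
  using tau_on_R subgroup.mem_carrier[OF R_sub] by (simp add: phi_def)

lemma Phi_inj: "inj_on Phi Hom"
proof (rule inj_onI)
  fix \<xi>1 \<xi>2 assume h1: "\<xi>1 \<in> Hom" and h2: "\<xi>2 \<in> Hom" and eq: "Phi \<xi>1 = Phi \<xi>2"
  have in2: "phi \<xi>2 \<in> Phi \<xi>1" using eq phi_HS[OF h2] unfolding Phi_def
    by (simp add: connected_component_refl)
  have in1: "phi \<xi>1 \<in> Phi \<xi>1" using phi_HS[OF h1] unfolding Phi_def
    by (simp add: connected_component_refl)
  have C: "connected (Phi \<xi>1)" "Phi \<xi>1 \<subseteq> HS" unfolding Phi_def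
    by (auto simp: connected_component_subset)
  show "\<xi>1 = \<xi>2"
  proof (rule extensionalityI)
    show "\<xi>1 \<in> extensional T" "\<xi>2 \<in> extensional T" using h1 h2 unfolding Hom_iff by auto
  next
    fix XX assume XX: "XX \<in> T"
    then obtain t where t: "t \<in> R" "XX = N #> t" using T_eq by blast
    have "phi \<xi>1 t = phi \<xi>2 t" using comp_const[OF C t(1) in1 in2] .
    then have "rt k (\<xi>1 XX) = rt k (\<xi>2 XX)" using phi_on_R[OF t(1)] t(2) by simp
    then show "\<xi>1 XX = \<xi>2 XX" using rt_inj[OF kpos] Hom_vals[OF h1 XX] Hom_vals[OF h2 XX] by blast
  qed
qed

end

lemma END_A5: True by simp


context L46
begin

lemma path_lemma:
  assumes \<phi>: "\<phi> \<in> HS" and \<psi>: "\<psi> \<in> HS" and agree: "\<forall>t\<in>R. \<phi> t = \<psi> t"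
  shows "\<phi> \<in> connected_component_set HS \<psi>"
proof -
  interpret P: cchar G \<phi> by (rule HS_cchar[OF \<phi>])
  interpret Q: cchar G \<psi> by (rule HS_cchar[OF \<psi>])
  have ej: "e j \<in> carrier G" if "j < s" for j using e_car that by blast
  define Lg where "Lg j = Ln (\<phi> (e j) / \<psi> (e j))" for j
  define z where "z x = (\<Sum>j<s. of_int (cf x j) * Lg j)" for x
  define \<gamma> where "\<gamma> u = (\<lambda>x\<in>carrier G. \<psi> x * exp (of_real u * z x))" for u :: real
  have expLg: "exp (Lg j) = \<phi> (e j) / \<psi> (e j)" if "j < s" for j
    unfolding Lg_def using P.nz Q.nz ej[OF that] by simp
  have zmult: "z (x \<otimes> y) = z x + z y" if "x \<in> carrier G" "y \<in> carrier G" for x y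
    unfolding z_def using cf_mult[OF that] by (simp add: sum.distrib[symmetric] distrib_right)
  have zR: "z x = 0" if "x \<in> R" for x unfolding z_def using cf_R[OF that] by simp
  have Ecar: "(\<lambda>j. e j [^] (c j::int)) \<in> {..<s} \<rightarrow> carrier G" for c using ej by auto
  have ez: "exp (z x) = \<phi> (E (cf x)) / \<psi> (E (cf x))" if x: "x \<in> carrier G" for x
  proof -
    have "exp (z x) = (\<Prod>j<s. exp (of_int (cf x j) * Lg j))" unfolding z_def by (simp add: exp_sum)
    also have "\<dots> = (\<Prod>j<s. (\<phi> (e j) / \<psi> (e j)) powi (cf x j))"
      by (rule prod.cong) (auto simp: exp_power_int[symmetric] expLg)
    also have "\<dots> = (\<Prod>j<s. \<phi> (e j [^] cf x j)) / (\<Prod>j<s. \<psi> (e j [^] cf x j))"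
      using ej by (simp add: power_int_divide_distrib prod_dividef P.intpow Q.intpow)
    also have "\<dots> = \<phi> (E (cf x)) / \<psi> (E (cf x))"
      unfolding E_def using Ecar by (simp add: P.prod Q.prod)
    finally show ?thesis .
  qed
  have \<gamma>0: "\<gamma> 0 = \<psi>" unfolding \<gamma>_def using HS_ext[OF \<psi>] by (simp add: extensional_restrict)
  have \<gamma>1: "\<gamma> 1 = \<phi>"
  proof -
    have "\<gamma> 1 = (\<lambda>x\<in>carrier G. \<phi> x)"
      unfolding \<gamma>_def
    proof (rule restrict_ext)
      fix x assume x: "x \<in> carrier G"
      have tx: "tau x \<in> R" "tau x \<in> carrier G" using tau_R tau_closed x by auto
      have "\<psi> x = \<psi> (tau x) * \<psi> (E (cf x))" using decomp[OF x] Q.mul[OF tx(2) E_closed] by metis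
      moreover have "\<phi> x = \<phi> (tau x) * \<phi> (E (cf x))" using decomp[OF x] P.mul[OF tx(2) E_closed] by metis
      moreover have "\<psi> (E (cf x)) \<noteq> 0" using Q.nz by simp
      ultimately show "\<psi> x * exp (of_real 1 * z x) = \<phi> x" using ez[OF x] agree tx(1) by simp
    qed
    then show ?thesis using HS_ext[OF \<phi>] by (simp add: extensional_restrict)
  qed
  have normLg: "Re (Lg j) = 0" if "j < s" "Gs = sphere 0 1" for j
  proof -
    have "norm (\<phi> (e j)) = 1" "norm (\<psi> (e j)) = 1"
      using HS_homT[OF \<phi>] HS_homT[OF \<psi>] that ej unfolding homT_def by auto
    then show ?thesis unfolding Lg_def using P.nz Q.nz ej[OF that(1)] by (simp add: norm_divide)
  qed
  have \<gamma>HS: "\<gamma> u \<in> HS" for u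
  proof -
    have vals: "\<gamma> u x \<in> Gs" if x: "x \<in> carrier G" for x
    proof (cases "Gs = sphere 0 1")
      case True
      have "Re (z x) = 0" unfolding z_def using normLg True by (simp add: Re_sum)
      moreover have "norm (\<psi> x) = 1" using HS_homT[OF \<psi>] x True unfolding homT_def by auto
      ultimately have "norm (\<gamma> u x) = 1" using x by (simp add: \<gamma>_def norm_mult)
      then show ?thesis using True by simp
    next
      case False
      then have "Gs = - {0}" using Gs by blast
      then show ?thesis using x Q.nz by (simp add: \<gamma>_def)
    qed
    have mult: "\<gamma> u (x \<otimes> y) = \<gamma> u x * \<gamma> u y" if "x \<in> carrier G" "y \<in> carrier G" for x y
      using that by (simp add: \<gamma>_def Q.mul zmult distrib_left exp_add)
    have S1: "\<gamma> u a = 1" if "a \<in> S" for a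
    proof -
      have a: "a \<in> R" "a \<in> carrier G" "a \<in> N" using that S_R Ssub S_N by auto
      show ?thesis using a zR HS_N[OF \<psi>] by (simp add: \<gamma>_def)
    qed
    show ?thesis unfolding HS_def Hset_def homT_def
      using vals mult S1 Ssub by (auto simp: \<gamma>_def)
  qed
  have cont: "continuous_on {0..1} \<gamma>"
  proof (rule continuous_on_coordinatewise_then_product)
    fix x
    show "continuous_on {0..1} (\<lambda>u. \<gamma> u x)"
    proof (cases "x \<in> carrier G")
      case True
      then show ?thesis unfolding \<gamma>_def by (simp add: continuous_intros)
    next
      case False
      then show ?thesis unfolding \<gamma>_def by simp
    qed
  qed
  have "connected (\<gamma> ` {0..1})" by (rule connected_continuous_image[OF cont connected_Icc])
  moreover have "\<gamma> ` {0..1} \<subseteq> HS" using \<gamma>HS by blast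
  moreover have "\<psi> \<in> \<gamma> ` {0..1}" using \<gamma>0 by (metis atLeastAtMost_iff image_eqI order_refl zero_le_one)
  moreover have "\<phi> \<in> \<gamma> ` {0..1}" using \<gamma>1 by (metis atLeastAtMost_iff image_eqI order_refl zero_le_one)
  ultimately have "connected_component HS \<psi> \<phi>" by (rule connected_componentI)
  then show ?thesis by simp
qed

definition idx where "idx z = (THE a. 0 \<le> a \<and> a < int k \<and> z = rt k a)"

lemma idx_spec: "z ^ k = 1 \<Longrightarrow> 0 \<le> idx z \<and> idx z < int k \<and> z = rt k (idx z)"
proof -
  assume z: "z ^ k = 1"
  obtain a where a: "0 \<le> a" "a < int k" "z = rt k a" using rt_surj[OF kpos z] by blast
  have "\<exists>!a. 0 \<le> a \<and> a < int k \<and> z = rt k a"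
    using a rt_inj[OF kpos] by blast
  then show ?thesis unfolding idx_def by (rule theI')
qed

lemma idx_rt: "0 \<le> a \<Longrightarrow> a < int k \<Longrightarrow> idx (rt k a) = a"
  using idx_spec[of "rt k a"] rt_pow[OF kpos] rt_inj[OF kpos, of a "idx (rt k a)"] by auto

lemma Phi_surj:
  assumes \<phi>: "\<phi> \<in> HS" and ek: "Ek G (int k) \<phi> = oneT G"
  shows "\<exists>\<xi>\<in>Hom. Phi \<xi> = connected_component_set HS \<phi>"
proof -
  interpret P: cchar G \<phi> by (rule HS_cchar[OF \<phi>])
  have pk: "\<phi> x ^ k = 1" if "x \<in> carrier G" for x
    using fun_cong[OF ek, of x] that by (simp add: Ek_def oneT_def)
  define \<xi> where "\<xi> XX = (if XX \<in> T then idx (\<phi> (SOME t. t \<in> XX)) else undefined)" for XX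
  have Rc: "t \<in> R \<Longrightarrow> t \<in> carrier G" for t using subgroup.mem_carrier[OF R_sub] by blast
  have key: "\<xi> (N #> t) = idx (\<phi> t)" if t: "t \<in> R" for t
  proof -
    have "t \<in> N #> t" using rcos_self[OF Rc[OF t] N_sub] .
    then have "(SOME t'. t' \<in> N #> t) \<in> N #> t" by (rule someI)
    then obtain h where h: "h \<in> N" "(SOME t'. t' \<in> N #> t) = h \<otimes> t" unfolding r_coset_def by blast
    have "\<phi> (h \<otimes> t) = \<phi> t" using h(1) subgroup.mem_carrier[OF N_sub] Rc[OF t] HS_N[OF \<phi> h(1)]
      by (simp add: P.mul)
    then show ?thesis unfolding \<xi>_def using coset_T[OF t] h by simp
  qed
  have hom: "\<xi> \<in> Hom"
    unfolding Hom_iff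
  proof (intro conjI ballI)
    show "\<xi> \<in> extensional T" unfolding \<xi>_def extensional_def by simp
  next
    fix XX assume "XX \<in> T"
    then obtain t where t: "t \<in> R" "XX = N #> t" using T_eq by blast
    show "\<xi> XX \<in> {0..<int k}" using key[OF t(1)] idx_spec[OF pk[OF Rc[OF t(1)]]] t(2) by simp
  next
    fix XX YY assume "XX \<in> T" "YY \<in> T"
    then have "XX \<in> (\<lambda>x. N #> x) ` R" "YY \<in> (\<lambda>x. N #> x) ` R" using T_eq by auto
    then obtain t t' where t: "t \<in> R" "XX = N #> t" and t': "t' \<in> R" "YY = N #> t'" by blast
    have tt: "t \<otimes> t' \<in> R" using t t' subgroup.m_closed[OF R_sub] by blast
    have XY: "XX <#> YY = N #> (t \<otimes> t')" using rcos_mult Rc t t' by simp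
    define a where "a = idx (\<phi> t)"
    define b where "b = idx (\<phi> t')"
    have a: "0 \<le> a" "a < int k" "\<phi> t = rt k a" unfolding a_def using idx_spec[OF pk[OF Rc[OF t(1)]]] by auto
    have b: "0 \<le> b" "b < int k" "\<phi> t' = rt k b" unfolding b_def using idx_spec[OF pk[OF Rc[OF t'(1)]]] by auto
    have "\<phi> (t \<otimes> t') = rt k ((a + b) mod int k)" using a b Rc t t' kpos by (simp add: P.mul rt_add rt_mod)
    then have "\<xi> (XX <#> YY) = (a + b) mod int k" using XY key[OF tt] kpos by (simp add: idx_rt)
    then show "\<xi> (XX <#> YY) = (\<xi> XX + \<xi> YY) mod int k" using key t t' a_def b_def by simp
  qed
  have agree: "\<forall>t\<in>R. \<phi> t = phi \<xi> t"
  proof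
    fix t assume t: "t \<in> R"
    show "\<phi> t = phi \<xi> t" using phi_on_R[OF t] key[OF t] idx_spec[OF pk[OF Rc[OF t]]] by simp
  qed
  have "\<phi> \<in> connected_component_set HS (phi \<xi>)" by (rule path_lemma[OF \<phi> phi_HS[OF hom] agree])
  then have "connected_component_set HS \<phi> = Phi \<xi>" unfolding Phi_def by (rule connected_component_eq)
  then show ?thesis using hom by metis
qed

lemma main_bij: "bij_betw Phi Hom {C \<in> ccomp HS. oneT G \<in> Ek G (int k) ` C}"
  unfolding bij_betw_def
proof (intro conjI Phi_inj equalityI subsetI)
  fix C assume "C \<in> Phi ` Hom"
  then obtain \<xi> where h: "\<xi> \<in> Hom" "C = Phi \<xi>" by blast
  have "C \<in> ccomp HS" unfolding ccomp_def h(2) Phi_def using phi_HS[OF h(1)] by blast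
  moreover have "phi \<xi> \<in> C" unfolding h(2) Phi_def using phi_HS[OF h(1)] by (simp add: connected_component_refl)
  ultimately show "C \<in> {C \<in> ccomp HS. oneT G \<in> Ek G (int k) ` C}" using phi_k[OF h(1)] by force
next
  fix C assume "C \<in> {C \<in> ccomp HS. oneT G \<in> Ek G (int k) ` C}"
  then obtain \<psi>0 \<phi> where C: "\<psi>0 \<in> HS" "C = connected_component_set HS \<psi>0" "\<phi> \<in> C"
    "Ek G (int k) \<phi> = oneT G" unfolding ccomp_def by auto
  have \<phi>HS: "\<phi> \<in> HS" using C connected_component_subset by blast
  have "connected_component_set HS \<phi> = C" using C(2,3) connected_component_eq by blast
  then show "C \<in> Phi ` Hom" using Phi_surj[OF \<phi>HS C(4)] by force
qed

end

lemma END_A6: True by simp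


theorem lemma4p6:
  fixes \<Gamma> :: "('a, 'b) monoid_scheme" and A :: "'a list" and Gs :: "complex set"
    and k :: nat and S :: "'a set"
  assumes "comm_group \<Gamma>" and "fin_gen_group \<Gamma>"
    and "set A \<subseteq> carrier \<Gamma>"
    and "Gs = sphere 0 1 \<or> Gs = - {0}"
    and "k > 0"
    and "S \<subseteq> set A"
  shows "card (ccomp (Hset \<Gamma> Gs S) \<inter> Lk \<Gamma> Gs A (int k)) = mult_S \<Gamma> S k"
proof -
  interpret L0 \<Gamma> S
    using assms(1,3,6) by (intro L0.intro L0_axioms.intro) auto
  obtain F where F: "finite F" "F \<subseteq> carrier \<Gamma>" "generate \<Gamma> F = carrier \<Gamma>"
    using assms(2) unfolding fin_gen_group_def by blast
  obtain s :: nat and e where se0: "(\<forall>j<s. e j \<in> carrier \<Gamma>) \<and>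
     (\<forall>x\<in>carrier \<Gamma>. \<exists>c. x \<otimes>\<^bsub>\<Gamma>\<^esub> inv\<^bsub>\<Gamma>\<^esub> (finprod \<Gamma> (\<lambda>j. e j [^]\<^bsub>\<Gamma>\<^esub> (c j::int)) {..<s}) \<in> R) \<and>
     (\<forall>c. finprod \<Gamma> (\<lambda>j. e j [^]\<^bsub>\<Gamma>\<^esub> (c j::int)) {..<s} \<in> R \<longrightarrow> (\<forall>j<s. c j = 0))"
  proof -
    have rad: "\<And>x m. x \<in> carrier \<Gamma> \<Longrightarrow> m > 0 \<Longrightarrow> x [^]\<^bsub>\<Gamma>\<^esub> (m::nat) \<in> R \<Longrightarrow> x \<in> R"
      by (rule R_rad)
    have ex: "\<exists>(s::nat) e. (\<forall>j<s. e j \<in> carrier \<Gamma>) \<and>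
     (\<forall>x\<in>carrier \<Gamma>. \<exists>c. x \<otimes>\<^bsub>\<Gamma>\<^esub> inv\<^bsub>\<Gamma>\<^esub> (finprod \<Gamma> (\<lambda>j. e j [^]\<^bsub>\<Gamma>\<^esub> (c j::int)) {..<s}) \<in> R) \<and>
     (\<forall>c. finprod \<Gamma> (\<lambda>j. e j [^]\<^bsub>\<Gamma>\<^esub> (c j::int)) {..<s} \<in> R \<longrightarrow> (\<forall>j<s. c j = 0))"
      apply (rule structure_mod_radical[where F=F and R=R])
          apply (rule F(1))
         apply (rule F(2))
        apply (rule F(3))
       apply (rule R_sub)
      apply (rule rad)
        apply assumption+
      done
    show ?thesis using ex by (elim exE) (rule that)
  qed
  note se = conjunct1[OF se0] conjunct1[OF conjunct2[OF se0]] conjunct2[OF conjunct2[OF se0]]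
  interpret L46 \<Gamma> S Gs k s e
    using se assms(4,5) by unfold_locales auto
  have "ccomp (Hset \<Gamma> Gs S) \<inter> Lk \<Gamma> Gs A (int k) = {C \<in> ccomp HS. oneT \<Gamma> \<in> Ek \<Gamma> (int k) ` C}"
  proof (intro equalityI subsetI)
    fix C assume "C \<in> ccomp (Hset \<Gamma> Gs S) \<inter> Lk \<Gamma> Gs A (int k)"
    then show "C \<in> {C \<in> ccomp HS. oneT \<Gamma> \<in> Ek \<Gamma> (int k) ` C}"
      unfolding HS_def Lk_def by blast
  next
    fix C assume C: "C \<in> {C \<in> ccomp HS. oneT \<Gamma> \<in> Ek \<Gamma> (int k) ` C}"
    then have "HS \<noteq> {}" unfolding ccomp_def by blast
    then have "C \<in> Lset \<Gamma> Gs A" unfolding Lset_def using C assms(6) unfolding HS_def by blast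
    then show "C \<in> ccomp (Hset \<Gamma> Gs S) \<inter> Lk \<Gamma> Gs A (int k)"
      using C unfolding Lk_def HS_def by blast
  qed
  moreover have "mult_S \<Gamma> S k = card Hom"
    unfolding mult_S_def Hom_def Q_def N_def ..
  ultimately show ?thesis using bij_betw_same_card[OF main_bij] by simp
qed


end
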